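(* Let $\Pi$ be the elliptic curve $u^2=s(s^2+s+7)$, let $$t=\frac12-\frac{(s^9-84s^6-378s^5-1512s^4-5208s^3-7236s^2-8127s-784)\,u}{432\,s(s+1)^2(s^2+s+7)^2},$$ and $$y=\frac12-\frac{(s^{10}+5s^9+24s^8+20s^7-266s^6-2874s^5-14812s^4-40316s^3-85359s^2-100067s-67396)\,u}{16(s+1)(s^2+s+7)(5s^6+63s^5+252s^4+854s^3+1449s^2+1827s+2030)}.$$ Then $y(t)$ is a solution of $\mathrm{P}_{\mathrm{VI}}$ with parameters $(\theta_1,\theta_2,\theta_3,\theta_4)=(4/7,4/7,4/7,1/3)$.
   Context: $\mathrm{P}_{\mathrm{VI}}$ is the equation $$\frac{d^2y}{dt^2}=\frac12\Big(\frac1y+\frac1{y-1}+\frac1{y-t}\Big)\Big(\frac{dy}{dt}\Big)^2-\Big(\frac1t+\frac1{t-1}+\frac1{y-t}\Big)\frac{dy}{dt}+\frac{y(y-1)(y-t)}{t^2(t-1)^2}\Big(\alpha+\beta\frac{t}{y^2}+\gamma\frac{t-1}{(y-1)^2}+\delta\frac{t(t-1)}{(y-t)^2}\Big),$$ with $\alpha=(\theta_4-1)^2/2$, $\beta=-\theta_1^2/2$, $\gamma=\theta_3^2/2$, $\delta=(1-\theta_2^2)/2$. When $y,t$ are given as rational functions of a parameter on a curve, derivatives with respect to $t$ are computed via the chain rule. *)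

theory Defs
  imports "HOL-Complex_Analysis.Complex_Analysis"
begin

text \<open>The Painleve VI right-hand side, with y' and y'' the first and second
  derivatives of y with respect to t.\<close>
definition PVI_params :: "complex \<Rightarrow> complex \<Rightarrow> complex \<Rightarrow> complex \<Rightarrow> complex \<times> complex \<times> complex \<times> complex" where
  "PVI_params th1 th2 th3 th4 = ((th4 - 1)^2 / 2, - (th1^2) / 2, th3^2 / 2, (1 - th2^2) / 2)"

definition PVI_eq :: "complex \<Rightarrow> complex \<Rightarrow> complex \<Rightarrow> complex \<Rightarrow>
    complex \<Rightarrow> complex \<Rightarrow> complex \<Rightarrow> complex \<Rightarrow> bool" where
  "PVI_eq th1 th2 th3 th4 t y y1 y2 \<longleftrightarrow>
     (case PVI_params th1 th2 th3 th4 of (\<alpha>, \<beta>, \<gamma>, \<delta>) \<Rightarrow>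
       y2 = (1/2) * (1/y + 1/(y-1) + 1/(y-t)) * y1^2
            - (1/t + 1/(t-1) + 1/(y-t)) * y1
            + (y*(y-1)*(y-t)) / (t^2*(t-1)^2)
              * (\<alpha> + \<beta>*t/y^2 + \<gamma>*(t-1)/(y-1)^2 + \<delta>*t*(t-1)/(y-t)^2))"

definition on_Pi :: "complex \<Rightarrow> complex \<Rightarrow> bool" where
  "on_Pi s u \<longleftrightarrow> u^2 = s * (s^2 + s + 7)"

definition t_Pi :: "complex \<Rightarrow> complex \<Rightarrow> complex" where
  "t_Pi s u = 1/2 - ((s^9 - 84* s^6 - 378* s^5 - 1512* s^4 - 5208* s^3 - 7236* s^2 - 8127* s - 784) * u)
                   / (432 * s * (s+1)^2 * (s^2+s+7)^2)"

definition y_Pi :: "complex \<Rightarrow> complex \<Rightarrow> complex" where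
  "y_Pi s u = 1/2 - ((s^10 + 5* s^9 + 24* s^8 + 20* s^7 - 266* s^6 - 2874* s^5 - 14812* s^4
                      - 40316* s^3 - 85359* s^2 - 100067* s - 67396) * u)
                   / (16 * (s+1) * (s^2+s+7)
                      * (5* s^6 + 63* s^5 + 252* s^4 + 854* s^3 + 1449* s^2 + 1827* s + 2030))"

end

theory Submission
  imports Defs
begin

definition a_s1 :: "complex \<Rightarrow> complex" where "a_s1 s = (1 + s)"

definition a_q2 :: "complex \<Rightarrow> complex" where "a_q2 s = (7 + s + s^2)"

definition a_Q6 :: "complex \<Rightarrow> complex" where "a_Q6 s = (2030 + 1827 * s + 1449 * s^2 + 854 * s^3 + 252 * s^4 + 63 * s^5 + 5 * s^6)"

definition a_sm1 :: "complex \<Rightarrow> complex" where "a_sm1 s = (- 1 + s)"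

definition a_r16 :: "complex \<Rightarrow> complex" where "a_r16 s = (16 + s + s^2)"

definition a_r47 :: "complex \<Rightarrow> complex" where "a_r47 s = (7 + 4 * s + s^2)"

definition a_g3 :: "complex \<Rightarrow> complex" where "a_g3 s = (- 7 + 3 * s + 3 * s^2 + s^3)"

definition a_sm7 :: "complex \<Rightarrow> complex" where "a_sm7 s = (- 7 + s)"

definition a_q4 :: "complex \<Rightarrow> complex" where "a_q4 s = (49 - 28 * s - 18 * s^2 - 4 * s^3 + s^4)"

definition a_f12_1 :: "complex \<Rightarrow> complex" where "a_f12_1 s = (336400 + 814088 * s + 1021641 * s^2 + 795466 * s^3 + 473805 * s^4 + 202120 * s^5 + 67874 * s^6 + 17148 * s^7 + 3298 * s^8 + 544 * s^9 + 85 * s^10 + 10 * s^11 + s^12)"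

definition a_f6_2 :: "complex \<Rightarrow> complex" where "a_f6_2 s = (290 + 1218 * s + 792 * s^2 + 452 * s^3 + 123 * s^4 + 36 * s^5 + 5 * s^6)"

definition a_f10_3 :: "complex \<Rightarrow> complex" where "a_f10_3 s = (218660 + 337183 * s + 351045 * s^2 + 207340 * s^3 + 97247 * s^4 + 34746 * s^5 + 9877 * s^6 + 2852 * s^7 + 633 * s^8 + 119 * s^9 + 10 * s^10)"

definition a_f15_4 :: "complex \<Rightarrow> complex" where "a_f15_4 s = (14667040 + 66201084 * s + 121903791 * s^2 + 142387827 * s^3 + 118565142 * s^4 + 76841457 * s^5 + 39475847 * s^6 + 16675416 * s^7 + 5783148 * s^8 + 1668710 * s^9 + 399285 * s^10 + 78411 * s^11 + 12750 * s^12 + 1677 * s^13 + 165 * s^14 + 10 * s^15)"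

definition a_f15_5 :: "complex \<Rightarrow> complex" where "a_f15_5 s = (- 227360 - 7411530 * s - 24359463 * s^2 - 34491569 * s^3 - 32598618 * s^4 - 20759310 * s^5 - 10516721 * s^6 - 4014729 * s^7 - 1271700 * s^8 - 320326 * s^9 - 64977 * s^10 - 11115 * s^11 - 1426 * s^12 - 66 * s^13 + 9 * s^14 + 5 * s^15)"

definition a_f16_6 :: "complex \<Rightarrow> complex" where "a_f16_6 s = (136813880 + 408096178 * s + 787740891 * s^2 + 879206328 * s^3 + 686239869 * s^4 + 418858776 * s^5 + 197182993 * s^6 + 78706274 * s^7 + 25343055 * s^8 + 7284658 * s^9 + 1878341 * s^10 + 475212 * s^11 + 114243 * s^12 + 25380 * s^13 + 3951 * s^14 + 506 * s^15 + 25 * s^16)"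

definition a_f30_7 :: "complex \<Rightarrow> complex" where "a_f30_7 s = (217742026297600 + 2471682800052480 * s + 10537846612639500 * s^2 + 26713418530523326 * s^3 + 47365505584420674 * s^4 + 65162770073047542 * s^5 + 73799315806344240 * s^6 + 71066948502314709 * s^7 + 59248512678383343 * s^8 + 43188494493273297 * s^9 + 27724206499035963 * s^10 + 15754461949089969 * s^11 + 7961482260597243 * s^12 + 3591350935413717 * s^13 + 1450741707902865 * s^14 + 526056780799938 * s^15 + 171561045347046 * s^16 + 50368848531066 * s^17 + 13322269988058 * s^18 + 3174204639264 * s^19 + 681720648504 * s^20 + 132133227264 * s^21 + 23202803442 * s^22 + 3714676761 * s^23 + 544875195 * s^24 + 73215333 * s^25 + 8796591 * s^26 + 908225 * s^27 + 74235 * s^28 + 4485 * s^29 + 125 * s^30)"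

lemmas a_defs = a_s1_def a_q2_def a_Q6_def a_sm1_def a_r16_def a_r47_def a_g3_def a_sm7_def a_q4_def a_f12_1_def a_f6_2_def a_f10_3_def a_f15_4_def a_f15_5_def a_f16_6_def a_f30_7_def
definition pp :: "complex \<Rightarrow> complex" where "pp s = s * (s^2 + s + 7)"
definition pd :: "complex \<Rightarrow> complex" where "pd s = 3 * s^2 + 2 * s + 7"
definition NT :: "complex \<Rightarrow> complex" where "NT s = (s^9 - 84* s^6 - 378* s^5 - 1512* s^4 - 5208* s^3 - 7236* s^2 - 8127* s - 784)"
definition DT :: "complex \<Rightarrow> complex" where "DT s = 432 * s * (s+1)^2 * (s^2+s+7)^2"
definition NY :: "complex \<Rightarrow> complex" where "NY s = (s^10 + 5* s^9 + 24* s^8 + 20* s^7 - 266* s^6 - 2874* s^5 - 14812* s^4 - 40316* s^3 - 85359* s^2 - 100067* s - 67396)"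
definition DY :: "complex \<Rightarrow> complex" where "DY s = 16 * (s+1) * (s^2+s+7) * (5* s^6 + 63* s^5 + 252* s^4 + 854* s^3 + 1449* s^2 + 1827* s + 2030)"
definition NTd :: "complex \<Rightarrow> complex" where "NTd s = (- 8127 - 14472 * s - 15624 * s^2 - 6048 * s^3 - 1890 * s^4 - 504 * s^5 + 9 * s^8)"
definition DTd :: "complex \<Rightarrow> complex" where "DTd s = (21168 + 96768 * s + 119232 * s^2 + 79488 * s^3 + 43200 * s^4 + 10368 * s^5 + 3024 * s^6)"
definition NYd :: "complex \<Rightarrow> complex" where "NYd s = (- 100067 - 170718 * s - 120948 * s^2 - 59248 * s^3 - 14370 * s^4 - 1596 * s^5 + 140 * s^6 + 192 * s^7 + 45 * s^8 + 10 * s^9)"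
definition DYd :: "complex \<Rightarrow> complex" where "DYd s = (464464 + 922208 * s + 1116192 * s^2 + 852544 * s^3 + 449120 * s^4 + 182112 * s^5 + 46816 * s^6 + 9344 * s^7 + 720 * s^8)"
definition Bf :: "complex \<Rightarrow> complex" where "Bf s = NT s / DT s"
definition Af :: "complex \<Rightarrow> complex" where "Af s = NY s / DY s"
definition Bd :: "complex \<Rightarrow> complex" where "Bd s = (NTd s * DT s - NT s * DTd s) / (DT s * DT s)"
definition Ad :: "complex \<Rightarrow> complex" where "Ad s = (NYd s * DY s - NY s * DYd s) / (DY s * DY s)"
definition rtp :: "complex \<Rightarrow> complex" where "rtp s = (- 7/864) * ((a_sm1 s)^6 * (a_r16 s) * (a_r47 s)^2) / (s^2 * (a_s1 s)^3 * (a_q2 s)^3)"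
definition ryp :: "complex \<Rightarrow> complex" where "ryp s = (- 1/32) * ((a_sm1 s) * (a_r47 s) * (a_f16_6 s)) / (s * (a_s1 s)^2 * (a_q2 s)^2 * (a_Q6 s)^2)"
definition Yp :: "complex \<Rightarrow> complex" where "Yp s = (1/256) * ((a_sm1 s)^2 * (a_r16 s) * (a_r47 s)^2 * (a_sm7 s) * (a_f12_1 s)) / ((a_s1 s)^2 * (a_q2 s) * (a_Q6 s)^2)"
definition Ttp :: "complex \<Rightarrow> complex" where "Ttp s = (1/186624) * ((a_sm1 s)^7 * (a_r16 s)^2 * (a_r47 s)^3 * (a_sm7 s)) / (s * (a_s1 s)^4 * (a_q2 s)^3)"
definition D2p :: "complex \<Rightarrow> complex" where "D2p s = (1/186624) * ((a_sm1 s)^4 * (a_r16 s)^2 * (a_r47 s)^4 * (a_sm7 s)^2 * (a_f6_2 s)^2) / (s * (a_s1 s)^4 * (a_q2 s)^3 * (a_Q6 s)^2)"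
definition Wp :: "complex \<Rightarrow> complex" where "Wp s = (1/6912) * ((a_sm1 s)^4 * (a_r16 s)^2 * (a_r47 s)^3 * (a_sm7 s) * (a_f10_3 s)) / ((a_s1 s)^3 * (a_q2 s)^2 * (a_Q6 s)^2)"
definition Ayp :: "complex \<Rightarrow> complex" where "Ayp s = (- 1/6912) * ((a_sm1 s)^2 * (a_r16 s) * (a_r47 s)^2 * (a_sm7 s)^2 * (a_f15_4 s)) / ((a_s1 s)^3 * (a_q2 s)^2 * (a_Q6 s)^2)"
definition Btp :: "complex \<Rightarrow> complex" where "Btp s = (- 1/186624) * ((a_sm1 s)^2 * (a_r16 s) * (a_r47 s)^2 * (a_sm7 s) * (a_f15_5 s)) / (s * (a_s1 s)^4 * (a_q2 s)^3 * (a_Q6 s))"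
definition BmAp :: "complex \<Rightarrow> complex" where "BmAp s = (1/432) * ((a_sm1 s)^2 * (a_r16 s) * (a_r47 s)^2 * (a_sm7 s) * (a_f6_2 s)) / (s * (a_s1 s)^2 * (a_q2 s)^2 * (a_Q6 s))"
definition Cfac :: "complex \<Rightarrow> complex" where "Cfac s = (27/7) * (s * (a_s1 s) * (a_q2 s) * (a_f16_6 s)) / ((a_Q6 s)^2 * (a_sm1 s)^5 * (a_r16 s) * (a_r47 s))"
definition Cpp :: "complex \<Rightarrow> complex" where "Cpp s = (- 27/7) * ((a_f30_7 s)) / ((a_Q6 s)^3 * (a_sm1 s)^6 * (a_r16 s)^2 * (a_r47 s)^2)"
definition CNx :: "complex \<Rightarrow> complex" where "CNx s = (25857823320 * s + 106681975722 * s^2 + 244419752367 * s^3 + 362053196820 * s^4 + 373164507009 * s^5 + 296138266137 * s^6 + 188536605075 * s^7 + 98613862641 * s^8 + 43747461153 * s^9 + 16424979849 * s^10 + 5422086945 * s^11 + 1573170741 * s^12 + 422353899 * s^13 + 105849963 * s^14 + 25228665 * s^15 + 5404131 * s^16 + 1012635 * s^17 + 139401 * s^18 + 15012 * s^19 + 675 * s^20)"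
definition CDx :: "complex \<Rightarrow> complex" where "CDx s = (- 3230785600 + 8290426620 * s - 4684917636 * s^2 - 852567317 * s^3 - 753900966 * s^4 - 717045273 * s^5 + 1842354528 * s^6 + 764621676 * s^7 + 111537720 * s^8 - 340801468 * s^9 - 380185512 * s^10 - 164252214 * s^11 - 5036612 * s^12 + 51960258 * s^13 + 40211136 * s^14 + 19645500 * s^15 + 6617016 * s^16 + 1735272 * s^17 + 330764 * s^18 + 47523 * s^19 + 4410 * s^20 + 175 * s^21)"
definition CNd :: "complex \<Rightarrow> complex" where "CNd s = (25857823320 + 213363951444 * s + 733259257101 * s^2 + 1448212787280 * s^3 + 1865822535045 * s^4 + 1776829596822 * s^5 + 1319756235525 * s^6 + 788910901128 * s^7 + 393727150377 * s^8 + 164249798490 * s^9 + 59642956395 * s^10 + 18878048892 * s^11 + 5490600687 * s^12 + 1481899482 * s^13 + 378429975 * s^14 + 86466096 * s^15 + 17214795 * s^16 + 2509218 * s^17 + 285228 * s^18 + 13500 * s^19)"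
definition CDd :: "complex \<Rightarrow> complex" where "CDd s = (8290426620 - 9369835272 * s - 2557701951 * s^2 - 3015603864 * s^3 - 3585226365 * s^4 + 11054127168 * s^5 + 5352351732 * s^6 + 892301760 * s^7 - 3067213212 * s^8 - 3801855120 * s^9 - 1806774354 * s^10 - 60439344 * s^11 + 675483354 * s^12 + 562955904 * s^13 + 294682500 * s^14 + 105872256 * s^15 + 29499624 * s^16 + 5953752 * s^17 + 902937 * s^18 + 88200 * s^19 + 3675 * s^20)"
definition Cf :: "complex \<Rightarrow> complex" where "Cf s = CNx s / CDx s"
lemma CNx_fac: "CNx s = (27) * (s * (a_s1 s) * (a_q2 s) * (a_f16_6 s))" unfolding CNx_def a_defs by algebra
lemma CDx_fac: "CDx s = (7) * ((a_Q6 s)^2 * (a_sm1 s)^5 * (a_r16 s) * (a_r47 s))" unfolding CDx_def a_defs by algebra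

lemma NT_deriv: "(NT has_field_derivative NTd s) (at s)"
  unfolding NT_def[abs_def] NTd_def by (rule derivative_eq_intros refl | simp)+
lemma DT_deriv: "(DT has_field_derivative DTd s) (at s)"
  unfolding DT_def[abs_def] DTd_def apply (rule derivative_eq_intros refl | simp)+ by algebra
lemma NY_deriv: "(NY has_field_derivative NYd s) (at s)"
  unfolding NY_def[abs_def] NYd_def by (rule derivative_eq_intros refl | simp)+
lemma DY_deriv: "(DY has_field_derivative DYd s) (at s)"
  unfolding DY_def[abs_def] DYd_def apply (rule derivative_eq_intros refl | simp)+ by algebra
lemma CNx_deriv: "(CNx has_field_derivative CNd s) (at s)"
  unfolding CNx_def[abs_def] CNd_def by (rule derivative_eq_intros refl | simp)+
lemma CDx_deriv: "(CDx has_field_derivative CDd s) (at s)"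
  unfolding CDx_def[abs_def] CDd_def by (rule derivative_eq_intros refl | simp)+
lemma pp_deriv: "(pp has_field_derivative pd s) (at s)"
  unfolding pp_def[abs_def] pd_def apply (rule derivative_eq_intros refl | simp)+ by algebra

lemma DT_fac: "DT s = 432 * s * (a_s1 s)^2 * (a_q2 s)^2" unfolding DT_def a_defs by algebra
lemma DY_fac: "DY s = 16 * a_s1 s * a_q2 s * a_Q6 s" unfolding DY_def a_defs by algebra
lemma pp_fac: "pp s = s * a_q2 s" unfolding pp_def a_defs by algebra

lemma t_eq: "t_Pi s u = 1/2 - Bf s * u" unfolding t_Pi_def Bf_def NT_def DT_def by simp
lemma y_eq: "y_Pi s u = 1/2 - Af s * u" unfolding y_Pi_def Af_def NY_def DY_def by simp

lemma pRt:
  assumes nz: "s \<noteq> 0" "a_s1 s \<noteq> 0" "a_q2 s \<noteq> 0" "a_Q6 s \<noteq> 0"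
  shows "- (Bd s + Bf s * pd s / (2 * pp s)) = rtp s"
proof -
  have nz2: "DT s \<noteq> 0" "DY s \<noteq> 0" "pp s \<noteq> 0"  using nz by (simp_all add: DT_fac DY_fac pp_fac CDx_fac)
  show ?thesis unfolding Af_def Bf_def Ad_def Bd_def rtp_def
    apply (simp add: field_simps nz nz2)
    apply (simp only: NT_def DT_def NY_def DY_def NTd_def DTd_def NYd_def DYd_def pp_def pd_def CNx_def CDx_def CNd_def CDd_def a_defs)
    by algebra
qed

lemma pRy:
  assumes nz: "s \<noteq> 0" "a_s1 s \<noteq> 0" "a_q2 s \<noteq> 0" "a_Q6 s \<noteq> 0"
  shows "- (Ad s + Af s * pd s / (2 * pp s)) = ryp s"
proof -
  have nz2: "DT s \<noteq> 0" "DY s \<noteq> 0" "pp s \<noteq> 0"  using nz by (simp_all add: DT_fac DY_fac pp_fac CDx_fac)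
  show ?thesis unfolding Af_def Bf_def Ad_def Bd_def ryp_def
    apply (simp add: field_simps nz nz2)
    apply (simp only: NT_def DT_def NY_def DY_def NTd_def DTd_def NYd_def DYd_def pp_def pd_def CNx_def CDx_def CNd_def CDd_def a_defs)
    by algebra
qed

lemma pY:
  assumes nz: "s \<noteq> 0" "a_s1 s \<noteq> 0" "a_q2 s \<noteq> 0" "a_Q6 s \<noteq> 0"
  shows "Af s ^ 2 * pp s - 1/4 = Yp s"
proof -
  have nz2: "DT s \<noteq> 0" "DY s \<noteq> 0" "pp s \<noteq> 0"  using nz by (simp_all add: DT_fac DY_fac pp_fac CDx_fac)
  show ?thesis unfolding Af_def Bf_def Ad_def Bd_def Yp_def
    apply (simp add: field_simps nz nz2)
    apply (simp only: NT_def DT_def NY_def DY_def NTd_def DTd_def NYd_def DYd_def pp_def pd_def CNx_def CDx_def CNd_def CDd_def a_defs)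
    by algebra
qed

lemma pTt:
  assumes nz: "s \<noteq> 0" "a_s1 s \<noteq> 0" "a_q2 s \<noteq> 0" "a_Q6 s \<noteq> 0"
  shows "Bf s ^ 2 * pp s - 1/4 = Ttp s"
proof -
  have nz2: "DT s \<noteq> 0" "DY s \<noteq> 0" "pp s \<noteq> 0"  using nz by (simp_all add: DT_fac DY_fac pp_fac CDx_fac)
  show ?thesis unfolding Af_def Bf_def Ad_def Bd_def Ttp_def
    apply (simp add: field_simps nz nz2)
    apply (simp only: NT_def DT_def NY_def DY_def NTd_def DTd_def NYd_def DYd_def pp_def pd_def CNx_def CDx_def CNd_def CDd_def a_defs)
    by algebra
qed

lemma pD2:
  assumes nz: "s \<noteq> 0" "a_s1 s \<noteq> 0" "a_q2 s \<noteq> 0" "a_Q6 s \<noteq> 0"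
  shows "(Bf s - Af s) ^ 2 * pp s = D2p s"
proof -
  have nz2: "DT s \<noteq> 0" "DY s \<noteq> 0" "pp s \<noteq> 0"  using nz by (simp_all add: DT_fac DY_fac pp_fac CDx_fac)
  show ?thesis unfolding Af_def Bf_def Ad_def Bd_def D2p_def
    apply (simp add: field_simps nz nz2)
    apply (simp only: NT_def DT_def NY_def DY_def NTd_def DTd_def NYd_def DYd_def pp_def pd_def CNx_def CDx_def CNd_def CDd_def a_defs)
    by algebra
qed

lemma pW:
  assumes nz: "s \<noteq> 0" "a_s1 s \<noteq> 0" "a_q2 s \<noteq> 0" "a_Q6 s \<noteq> 0"
  shows "- 1/4 - Af s ^ 2 * pp s + 2 * Af s * Bf s * pp s = Wp s"
proof -
  have nz2: "DT s \<noteq> 0" "DY s \<noteq> 0" "pp s \<noteq> 0"  using nz by (simp_all add: DT_fac DY_fac pp_fac CDx_fac)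
  show ?thesis unfolding Af_def Bf_def Ad_def Bd_def Wp_def
    apply (simp add: field_simps nz nz2)
    apply (simp only: NT_def DT_def NY_def DY_def NTd_def DTd_def NYd_def DYd_def pp_def pd_def CNx_def CDx_def CNd_def CDd_def a_defs)
    by algebra
qed

lemma pAy:
  assumes nz: "s \<noteq> 0" "a_s1 s \<noteq> 0" "a_q2 s \<noteq> 0" "a_Q6 s \<noteq> 0"
  shows "2 * Af s * (Af s - Bf s) * pp s + (Af s ^ 2 * pp s - 1/4) = Ayp s"
proof -
  have nz2: "DT s \<noteq> 0" "DY s \<noteq> 0" "pp s \<noteq> 0"  using nz by (simp_all add: DT_fac DY_fac pp_fac CDx_fac)
  show ?thesis unfolding Af_def Bf_def Ad_def Bd_def Ayp_def
    apply (simp add: field_simps nz nz2)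
    apply (simp only: NT_def DT_def NY_def DY_def NTd_def DTd_def NYd_def DYd_def pp_def pd_def CNx_def CDx_def CNd_def CDd_def a_defs)
    by algebra
qed

lemma pBt:
  assumes nz: "s \<noteq> 0" "a_s1 s \<noteq> 0" "a_q2 s \<noteq> 0" "a_Q6 s \<noteq> 0"
  shows "2 * Bf s * (Af s - Bf s) * pp s + (Bf s ^ 2 * pp s - 1/4) = Btp s"
proof -
  have nz2: "DT s \<noteq> 0" "DY s \<noteq> 0" "pp s \<noteq> 0"  using nz by (simp_all add: DT_fac DY_fac pp_fac CDx_fac)
  show ?thesis unfolding Af_def Bf_def Ad_def Bd_def Btp_def
    apply (simp add: field_simps nz nz2)
    apply (simp only: NT_def DT_def NY_def DY_def NTd_def DTd_def NYd_def DYd_def pp_def pd_def CNx_def CDx_def CNd_def CDd_def a_defs)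
    by algebra
qed

lemma pBmA:
  assumes nz: "s \<noteq> 0" "a_s1 s \<noteq> 0" "a_q2 s \<noteq> 0" "a_Q6 s \<noteq> 0"
  shows "Bf s - Af s = BmAp s"
proof -
  have nz2: "DT s \<noteq> 0" "DY s \<noteq> 0" "pp s \<noteq> 0"  using nz by (simp_all add: DT_fac DY_fac pp_fac CDx_fac)
  show ?thesis unfolding Af_def Bf_def Ad_def Bd_def BmAp_def
    apply (simp add: field_simps nz nz2)
    apply (simp only: NT_def DT_def NY_def DY_def NTd_def DTd_def NYd_def DYd_def pp_def pd_def CNx_def CDx_def CNd_def CDd_def a_defs)
    by algebra
qed

lemma pCp:
  assumes nz: "s \<noteq> 0" "a_s1 s \<noteq> 0" "a_q2 s \<noteq> 0" "a_Q6 s \<noteq> 0" "a_sm1 s \<noteq> 0" "a_r16 s \<noteq> 0" "a_r47 s \<noteq> 0"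
  shows "(CNd s * CDx s - CNx s * CDd s) / (CDx s * CDx s) = Cpp s"
proof -
  have nz2: "DT s \<noteq> 0" "DY s \<noteq> 0" "pp s \<noteq> 0" "CDx s \<noteq> 0" using nz by (simp_all add: DT_fac DY_fac pp_fac CDx_fac)
  show ?thesis unfolding Af_def Bf_def Ad_def Bd_def Cpp_def
    apply (simp add: field_simps nz nz2)
    apply (simp only: NT_def DT_def NY_def DY_def NTd_def DTd_def NYd_def DYd_def pp_def pd_def CNx_def CDx_def CNd_def CDd_def a_defs)
    by algebra
qed

lemma pC1:
  assumes nz: "s \<noteq> 0" "a_s1 s \<noteq> 0" "a_q2 s \<noteq> 0" "a_Q6 s \<noteq> 0" "a_sm1 s \<noteq> 0" "a_r16 s \<noteq> 0" "a_r47 s \<noteq> 0"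
  shows "ryp s / rtp s = Cf s"
  using nz unfolding ryp_def rtp_def Cf_def CNx_fac CDx_fac
  by (simp add: field_simps; ((rule disjI2)+)?; algebra?)
lemma pC2: "Cf s = Cfac s"
  unfolding Cf_def Cfac_def CNx_fac CDx_fac by simp
lemmas pC = pC1 pC2

lemma final_poly: "0 + (1/4045267795968) * ((a_sm1 s)^6 * (a_r16 s)^3 * (a_r47 s)^6 * (a_sm7 s)^4 * (a_f12_1 s) * (a_f6_2 s) * (a_f30_7 s)) - (- 1/16181071183872) * (s * (a_sm1 s)^6 * (a_r16 s)^3 * (a_r47 s)^6 * (a_sm7 s)^4 * (a_f15_4 s) * (a_f16_6 s)^2) + (- 1/1155790798848) * ((a_Q6 s) * (a_sm1 s)^6 * (a_r16 s)^3 * (a_r47 s)^6 * (a_sm7 s)^3 * (a_f12_1 s) * (a_f15_5 s) * (a_f16_6 s)) - (1/27518828544) * ((a_s1 s) * (a_q2 s) * (a_sm1 s)^8 * (a_r16 s)^4 * (a_r47 s)^8 * (a_sm7 s)^4 * (a_f12_1 s)^2 * (a_f6_2 s)^2) - (1/3950456832) * ((a_s1 s)^2 * (a_q2 s) * (a_Q6 s)^2 * (a_sm1 s)^8 * (a_r16 s)^4 * (a_r47 s)^7 * (a_sm7 s)^3 * (a_f6_2 s)^2 * (a_f10_3 s)) - (11/199766310912) * ((a_s1 s) * (a_q2 s) * (a_Q6 s)^2 * (a_sm1 s)^11 * (a_r16 s)^4 * (a_r47 s)^7 * (a_sm7 s)^3 * (a_f12_1 s)^2) = 0"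
  unfolding a_defs by algebra

lemma final_t0:
  assumes nz: "s \<noteq> 0" "a_s1 s \<noteq> 0" "a_q2 s \<noteq> 0" "a_Q6 s \<noteq> 0" "a_sm1 s \<noteq> 0" "a_r16 s \<noteq> 0" "a_r47 s \<noteq> 0"
  shows "2 * Yp s * BmAp s * Ttp s^2 * (Cpp s / rtp s) = (1/4045267795968) * ((a_sm1 s)^6 * (a_r16 s)^3 * (a_r47 s)^6 * (a_sm7 s)^4 * (a_f12_1 s) * (a_f6_2 s) * (a_f30_7 s)) / (s * (a_s1 s)^9 * (a_q2 s)^6 * (a_Q6 s)^6)"
  using nz unfolding Yp_def Ttp_def D2p_def Wp_def Ayp_def Btp_def BmAp_def Cfac_def Cpp_def rtp_def
  by (simp add: field_simps; ((rule disjI2)+)?; algebra?)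

lemma final_t1:
  assumes nz: "s \<noteq> 0" "a_s1 s \<noteq> 0" "a_q2 s \<noteq> 0" "a_Q6 s \<noteq> 0" "a_sm1 s \<noteq> 0" "a_r16 s \<noteq> 0" "a_r47 s \<noteq> 0"
  shows "Ttp s^2 * Ayp s * Cfac s^2 = (- 1/16181071183872) * (s * (a_sm1 s)^6 * (a_r16 s)^3 * (a_r47 s)^6 * (a_sm7 s)^4 * (a_f15_4 s) * (a_f16_6 s)^2) / (s * (a_s1 s)^9 * (a_q2 s)^6 * (a_Q6 s)^6)"
  using nz unfolding Yp_def Ttp_def D2p_def Wp_def Ayp_def Btp_def BmAp_def Cfac_def Cpp_def rtp_def
  by (simp add: field_simps; ((rule disjI2)+)?; algebra?)

lemma final_t2:
  assumes nz: "s \<noteq> 0" "a_s1 s \<noteq> 0" "a_q2 s \<noteq> 0" "a_Q6 s \<noteq> 0" "a_sm1 s \<noteq> 0" "a_r16 s \<noteq> 0" "a_r47 s \<noteq> 0"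
  shows "2 * Yp s * Ttp s * Btp s * Cfac s = (- 1/1155790798848) * ((a_Q6 s) * (a_sm1 s)^6 * (a_r16 s)^3 * (a_r47 s)^6 * (a_sm7 s)^3 * (a_f12_1 s) * (a_f15_5 s) * (a_f16_6 s)) / (s * (a_s1 s)^9 * (a_q2 s)^6 * (a_Q6 s)^6)"
  using nz unfolding Yp_def Ttp_def D2p_def Wp_def Ayp_def Btp_def BmAp_def Cfac_def Cpp_def rtp_def
  by (simp add: field_simps; ((rule disjI2)+)?; algebra?)

lemma final_t3:
  assumes nz: "s \<noteq> 0" "a_s1 s \<noteq> 0" "a_q2 s \<noteq> 0" "a_Q6 s \<noteq> 0" "a_sm1 s \<noteq> 0" "a_r16 s \<noteq> 0" "a_r47 s \<noteq> 0"
  shows "4/9 * Yp s^2 * D2p s = (1/27518828544) * ((a_s1 s) * (a_q2 s) * (a_sm1 s)^8 * (a_r16 s)^4 * (a_r47 s)^8 * (a_sm7 s)^4 * (a_f12_1 s)^2 * (a_f6_2 s)^2) / (s * (a_s1 s)^9 * (a_q2 s)^6 * (a_Q6 s)^6)"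
  using nz unfolding Yp_def Ttp_def D2p_def Wp_def Ayp_def Btp_def BmAp_def Cfac_def Cpp_def rtp_def
  by (simp add: field_simps; ((rule disjI2)+)?; algebra?)

lemma final_t4:
  assumes nz: "s \<noteq> 0" "a_s1 s \<noteq> 0" "a_q2 s \<noteq> 0" "a_Q6 s \<noteq> 0" "a_sm1 s \<noteq> 0" "a_r16 s \<noteq> 0" "a_r47 s \<noteq> 0"
  shows "16/49 * Wp s * D2p s = (1/3950456832) * ((a_s1 s)^2 * (a_q2 s) * (a_Q6 s)^2 * (a_sm1 s)^8 * (a_r16 s)^4 * (a_r47 s)^7 * (a_sm7 s)^3 * (a_f6_2 s)^2 * (a_f10_3 s)) / (s * (a_s1 s)^9 * (a_q2 s)^6 * (a_Q6 s)^6)"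
  using nz unfolding Yp_def Ttp_def D2p_def Wp_def Ayp_def Btp_def BmAp_def Cfac_def Cpp_def rtp_def
  by (simp add: field_simps; ((rule disjI2)+)?; algebra?)

lemma final_t5:
  assumes nz: "s \<noteq> 0" "a_s1 s \<noteq> 0" "a_q2 s \<noteq> 0" "a_Q6 s \<noteq> 0" "a_sm1 s \<noteq> 0" "a_r16 s \<noteq> 0" "a_r47 s \<noteq> 0"
  shows "33/49 * Ttp s * Yp s^2 = (11/199766310912) * ((a_s1 s) * (a_q2 s) * (a_Q6 s)^2 * (a_sm1 s)^11 * (a_r16 s)^4 * (a_r47 s)^7 * (a_sm7 s)^3 * (a_f12_1 s)^2) / (s * (a_s1 s)^9 * (a_q2 s)^6 * (a_Q6 s)^6)"
  using nz unfolding Yp_def Ttp_def D2p_def Wp_def Ayp_def Btp_def BmAp_def Cfac_def Cpp_def rtp_def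
  by (simp add: field_simps; ((rule disjI2)+)?; algebra?)

lemma final_id:
  assumes nz: "s \<noteq> 0" "a_s1 s \<noteq> 0" "a_q2 s \<noteq> 0" "a_Q6 s \<noteq> 0" "a_sm1 s \<noteq> 0" "a_r16 s \<noteq> 0" "a_r47 s \<noteq> 0"
  shows "2 * Yp s * BmAp s * Ttp s^2 * (Cpp s / rtp s) = Ttp s^2 * Ayp s * Cfac s^2 - 2 * Yp s * Ttp s * Btp s * Cfac s + 2 * (2/9 * Yp s^2 * D2p s + 8/49 * Wp s * D2p s + 33/98 * Ttp s * Yp s^2)"
proof -
  have L: "s * (a_s1 s)^9 * (a_q2 s)^6 * (a_Q6 s)^6 \<noteq> 0" using nz by simp
  have "2 * Yp s * BmAp s * Ttp s^2 * (Cpp s / rtp s) - (Ttp s^2 * Ayp s * Cfac s^2 - 2 * Yp s * Ttp s * Btp s * Cfac s + 2 * (2/9 * Yp s^2 * D2p s + 8/49 * Wp s * D2p s + 33/98 * Ttp s * Yp s^2)) = 2 * Yp s * BmAp s * Ttp s^2 * (Cpp s / rtp s) - Ttp s^2 * Ayp s * Cfac s^2 + 2 * Yp s * Ttp s * Btp s * Cfac s - 4/9 * Yp s^2 * D2p s - 16/49 * Wp s * D2p s - 33/49 * Ttp s * Yp s^2" by algebra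
  also have "... = (0 + (1/4045267795968) * ((a_sm1 s)^6 * (a_r16 s)^3 * (a_r47 s)^6 * (a_sm7 s)^4 * (a_f12_1 s) * (a_f6_2 s) * (a_f30_7 s)) - (- 1/16181071183872) * (s * (a_sm1 s)^6 * (a_r16 s)^3 * (a_r47 s)^6 * (a_sm7 s)^4 * (a_f15_4 s) * (a_f16_6 s)^2) + (- 1/1155790798848) * ((a_Q6 s) * (a_sm1 s)^6 * (a_r16 s)^3 * (a_r47 s)^6 * (a_sm7 s)^3 * (a_f12_1 s) * (a_f15_5 s) * (a_f16_6 s)) - (1/27518828544) * ((a_s1 s) * (a_q2 s) * (a_sm1 s)^8 * (a_r16 s)^4 * (a_r47 s)^8 * (a_sm7 s)^4 * (a_f12_1 s)^2 * (a_f6_2 s)^2) - (1/3950456832) * ((a_s1 s)^2 * (a_q2 s) * (a_Q6 s)^2 * (a_sm1 s)^8 * (a_r16 s)^4 * (a_r47 s)^7 * (a_sm7 s)^3 * (a_f6_2 s)^2 * (a_f10_3 s)) - (11/199766310912) * ((a_s1 s) * (a_q2 s) * (a_Q6 s)^2 * (a_sm1 s)^11 * (a_r16 s)^4 * (a_r47 s)^7 * (a_sm7 s)^3 * (a_f12_1 s)^2)) / (s * (a_s1 s)^9 * (a_q2 s)^6 * (a_Q6 s)^6)"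
    unfolding final_t0[OF nz] final_t1[OF nz] final_t2[OF nz] final_t3[OF nz] final_t4[OF nz] final_t5[OF nz]
    by (simp only: add_divide_distrib diff_divide_distrib) simp
  also have "... = 0" using final_poly by simp
  finally show ?thesis by simp
qed


lemma PVI_params_val: "PVI_params (4/7) (4/7) (4/7) (1/3) = (2/9, -8/49, 8/49, 33/98)"
  unfolding PVI_params_def by (simp add: power2_eq_square)

lemma PVI_from_poly:
  fixes t y y1 y2 R :: complex
  assumes nz: "y \<noteq> 0" "y - 1 \<noteq> 0" "y - t \<noteq> 0" "t \<noteq> 0" "t - 1 \<noteq> 0"
  and H: "2*y*(y-1)*(y-t)*t^2*(t-1)^2*y2 = R"
  and R: "R = t^2*(t-1)^2*((y-1)*(y-t)+y*(y-t)+y*(y-1))*y1^2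
       - 2*y*(y-1)*t*(t-1)*((2*t-1)*(y-t)+t*(t-1))*y1
       + 2*(2/9*y^2*(y-1)^2*(y-t)^2 - 8/49*t*(y-1)^2*(y-t)^2 + 8/49*(t-1)*y^2*(y-t)^2
            + 33/98*t*(t-1)*y^2*(y-1)^2)"
  shows "PVI_eq (4/7) (4/7) (4/7) (1/3) t y y1 y2"
proof -
  define A where "A = y - 1"
  define B where "B = y - t"
  define C where "C = t - 1"
  have nzA: "A \<noteq> 0" "B \<noteq> 0" "C \<noteq> 0" using nz by (simp_all add: A_def B_def C_def)
  have H': "2*y*A*B*t^2*C^2*y2 = R" using H unfolding A_def B_def C_def .
  have y2: "y2 = R/(2*y*A*B*t^2*C^2)" using H' nz(1,4) nzA by (simp add: field_simps)
  have R': "R = t^2*C^2*(A*B+y*B+y*A)*y1^2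
       - 2*y*A*t*C*((2*t-1)*B+t*C)*y1
       + 2*(2/9*y^2*A^2*B^2 - 8/49*t*A^2*B^2 + 8/49*C*y^2*B^2
            + 33/98*t*C*y^2*A^2)" using R unfolding A_def B_def C_def .
  have P: "PVI_eq (4/7) (4/7) (4/7) (1/3) t y y1 y2 \<longleftrightarrow> y2 = (1/2)*(1/y + 1/A + 1/B)*y1^2 - (1/t + 1/C + 1/B)*y1
     + (y*A*B)/(t^2*C^2)*(2/9 + (-8/49)*t/y^2 + 8/49*C/A^2 + 33/98*t*C/B^2)"
    unfolding PVI_eq_def PVI_params_val prod.case A_def B_def C_def by simp
  show ?thesis unfolding P unfolding y2 R' using nz(1,4) nzA
    apply (simp add: field_simps)
    using C_def by algebra
qed

lemma PVI_subst:
  fixes a b c e u P Yv Tv Dv Wv Ayv Btv BAv eP :: complex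
  assumes u2: "u^2 = P"
  and nz: "1/2 - a*u \<noteq> 0" "1/2 - a*u \<noteq> 1" "1/2 - a*u \<noteq> 1/2 - b*u" "1/2 - b*u \<noteq> 0" "1/2 - b*u \<noteq> 1"
  and hY: "a^2*P - 1/4 = Yv" and hT: "b^2*P - 1/4 = Tv" and hD: "(b-a)^2*P = Dv"
  and hW: "- 1/4 - a^2*P + 2*a*b*P = Wv" and hAy: "2*a*(a-b)*P + (a^2*P - 1/4) = Ayv"
  and hBt: "2*b*(a-b)*P + (b^2*P - 1/4) = Btv" and hBA: "b - a = BAv" and heP: "e*P = eP"
  and E: "2*Yv*BAv*Tv^2*eP = Tv^2*Ayv*c^2 - 2*Yv*Tv*Btv*c + 2*(2/9*Yv^2*Dv + 8/49*Wv*Dv + 33/98*Tv*Yv^2)"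
  shows "PVI_eq (4/7) (4/7) (4/7) (1/3) (1/2 - b*u) (1/2 - a*u) c (e*u)"
proof (rule PVI_from_poly[OF _ _ _ _ _ _ refl])
  show "1/2 - a*u \<noteq> 0" by (rule nz(1))
  show "1/2 - a*u - 1 \<noteq> 0" by (metis nz(2) right_minus_eq)
  show "1/2 - a*u - (1/2 - b*u) \<noteq> 0" by (metis nz(3) right_minus_eq)
  show "1/2 - b*u \<noteq> 0" by (rule nz(4))
  show "1/2 - b*u - 1 \<noteq> 0" by (metis nz(5) right_minus_eq)
  have E': "2*(a^2*P - 1/4)*(b - a)*(b^2*P - 1/4)^2*(e*P) = (b^2*P - 1/4)^2*(2*a*(a-b)*P + (a^2*P - 1/4))*c^2
     - 2*(a^2*P - 1/4)*(b^2*P - 1/4)*(2*b*(a-b)*P + (b^2*P - 1/4))*c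
     + 2*(2/9*(a^2*P - 1/4)^2*((b-a)^2*P) + 8/49*(- 1/4 - a^2*P + 2*a*b*P)*((b-a)^2*P) + 33/98*(b^2*P - 1/4)*(a^2*P - 1/4)^2)"
    using E unfolding hY[symmetric] hT[symmetric] hD[symmetric] hW[symmetric] hAy[symmetric] hBt[symmetric] hBA[symmetric] heP[symmetric] .
  show "2*(1/2 - a*u)*((1/2 - a*u)-1)*((1/2 - a*u)-(1/2 - b*u))*(1/2 - b*u)^2*((1/2 - b*u)-1)^2*(e*u) =
    (1/2 - b*u)^2*((1/2 - b*u)-1)^2*(((1/2 - a*u)-1)*((1/2 - a*u)-(1/2 - b*u))+(1/2 - a*u)*((1/2 - a*u)-(1/2 - b*u))+(1/2 - a*u)*((1/2 - a*u)-1))*c^2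
       - 2*(1/2 - a*u)*((1/2 - a*u)-1)*(1/2 - b*u)*((1/2 - b*u)-1)*((2*(1/2 - b*u)-1)*((1/2 - a*u)-(1/2 - b*u))+(1/2 - b*u)*((1/2 - b*u)-1))*c
       + 2*(2/9*(1/2 - a*u)^2*((1/2 - a*u)-1)^2*((1/2 - a*u)-(1/2 - b*u))^2 - 8/49*(1/2 - b*u)*((1/2 - a*u)-1)^2*((1/2 - a*u)-(1/2 - b*u))^2 + 8/49*((1/2 - b*u)-1)*(1/2 - a*u)^2*((1/2 - a*u)-(1/2 - b*u))^2
            + 33/98*(1/2 - b*u)*((1/2 - b*u)-1)*(1/2 - a*u)^2*((1/2 - a*u)-1)^2)"
    using E' u2 by algebra
qed

lemma ev_ne: "isCont (f::complex \<Rightarrow> complex) x \<Longrightarrow> f x \<noteq> (0::complex) \<Longrightarrow> eventually (\<lambda>y. f y \<noteq> 0) (nhds x)"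
  using continuous_at_avoid[of x f 0] by (auto simp: eventually_nhds_metric dist_commute)

lemma Bf_deriv: "DT s \<noteq> 0 \<Longrightarrow> (Bf has_field_derivative Bd s) (at s)"
proof -
  assume "DT s \<noteq> 0"
  have e: "Bf = (\<lambda>s. NT s / DT s)" by (rule ext) (simp add: Bf_def)
  show ?thesis unfolding e Bd_def by (rule DERIV_divide[OF NT_deriv DT_deriv \<open>DT s \<noteq> 0\<close>])
qed

lemma Af_deriv: "DY s \<noteq> 0 \<Longrightarrow> (Af has_field_derivative Ad s) (at s)"
proof -
  assume "DY s \<noteq> 0"
  have e: "Af = (\<lambda>s. NY s / DY s)" by (rule ext) (simp add: Af_def)
  show ?thesis unfolding e Ad_def by (rule DERIV_divide[OF NY_deriv DY_deriv \<open>DY s \<noteq> 0\<close>])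
qed

lemma Cf_deriv: "CDx s \<noteq> 0 \<Longrightarrow> (Cf has_field_derivative (CNd s * CDx s - CNx s * CDd s) / (CDx s * CDx s)) (at s)"
proof -
  assume "CDx s \<noteq> 0"
  have e: "Cf = (\<lambda>s. CNx s / CDx s)" by (rule ext) (simp add: Cf_def)
  show ?thesis unfolding e by (rule DERIV_divide[OF CNx_deriv CDx_deriv \<open>CDx s \<noteq> 0\<close>])
qed

lemma F_hasderiv:
  assumes "(F has_field_derivative Fd) (at (S x))" "(S has_field_derivative S') (at x)"
    "(U has_field_derivative U') (at x)"
  shows "((\<lambda>x. 1/2 - F (S x) * U x) has_field_derivative -(Fd * S' * U x + F (S x) * U')) (at x)"
proof -
  have h1: "((\<lambda>x. F (S x)) has_field_derivative Fd * S') (at x)" by (rule DERIV_chain2[OF assms(1) assms(2)])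
  have h2: "((\<lambda>x. F (S x) * U x) has_field_derivative Fd * S' * U x + U' * F (S x)) (at x)"
    by (rule DERIV_mult[OF h1 assms(3)])
  have h3: "((\<lambda>x. 1/2 - F (S x) * U x) has_field_derivative 0 - (Fd * S' * U x + U' * F (S x))) (at x)"
    by (rule DERIV_diff[OF DERIV_const h2])
  show ?thesis using h3 by (simp add: algebra_simps)
qed

lemma comb:
  fixes u p pdv sd Ud B Bdv rt :: complex
  assumes "u^2 = p" "u \<noteq> 0" "2*u*Ud = pdv* sd" "rt = -(Bdv + B*pdv/(2*p))"
  shows "-(Bdv* sd*u + B*Ud) = sd*u*rt"
proof -
  have p0: "p \<noteq> 0" using assms(1,2) by auto
  have Ud: "Ud = pdv* sd/(2*u)" using assms(2,3) by (simp add: field_simps)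
  show ?thesis unfolding Ud assms(4) assms(1)[symmetric] using assms(2)
    by (simp add: field_simps power2_eq_square)
qed

theorem mainTheorem15:
  fixes S U :: "complex \<Rightarrow> complex" and A :: "complex set" and \<tau> :: complex
  assumes "open A" and "\<tau> \<in> A"
    and "S holomorphic_on A" and "U holomorphic_on A"
    and "\<forall>\<sigma>\<in>A. on_Pi (S \<sigma>) (U \<sigma>)"
    and "S \<tau> \<noteq> 0" and "S \<tau> + 1 \<noteq> 0" and "(S \<tau>)^2 + S \<tau> + 7 \<noteq> 0"
    and "5* (S \<tau>)^6 + 63* (S \<tau>)^5 + 252* (S \<tau>)^4 + 854* (S \<tau>)^3 + 1449* (S \<tau>)^2
           + 1827* (S \<tau>) + 2030 \<noteq> 0"
    and "deriv (\<lambda>\<sigma>. t_Pi (S \<sigma>) (U \<sigma>)) \<tau> \<noteq> 0"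
    and "t_Pi (S \<tau>) (U \<tau>) \<notin> {0, 1}"
    and "y_Pi (S \<tau>) (U \<tau>) \<notin> {0, 1, t_Pi (S \<tau>) (U \<tau>)}"
  shows "let T = (\<lambda>\<sigma>. t_Pi (S \<sigma>) (U \<sigma>));
             Y = (\<lambda>\<sigma>. y_Pi (S \<sigma>) (U \<sigma>));
             Y1 = (\<lambda>\<sigma>. deriv Y \<sigma> / deriv T \<sigma>);
             Y2 = deriv Y1 \<tau> / deriv T \<tau>
         in PVI_eq (4/7) (4/7) (4/7) (1/3) (T \<tau>) (Y \<tau>) (Y1 \<tau>) Y2"
proof -
  define T where "T = (\<lambda>\<sigma>. t_Pi (S \<sigma>) (U \<sigma>))"
  define Y where "Y = (\<lambda>\<sigma>. y_Pi (S \<sigma>) (U \<sigma>))"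
  define Y1 where "Y1 = (\<lambda>\<sigma>. deriv Y \<sigma> / deriv T \<sigma>)"
  have T_eq: "T = (\<lambda>\<sigma>. 1/2 - Bf (S \<sigma>) * U \<sigma>)" unfolding T_def by (simp add: t_eq)
  have Y_eq: "Y = (\<lambda>\<sigma>. 1/2 - Af (S \<sigma>) * U \<sigma>)" unfolding Y_def by (simp add: y_eq)
  have dS: "(S has_field_derivative deriv S \<sigma>) (at \<sigma>)" if "\<sigma> \<in> A" for \<sigma>
    using holomorphic_derivI[OF assms(3) assms(1) that] by simp
  have dU: "(U has_field_derivative deriv U \<sigma>) (at \<sigma>)" if "\<sigma> \<in> A" for \<sigma>
    using holomorphic_derivI[OF assms(4) assms(1) that] by simp
  have u2: "U \<sigma> ^ 2 = pp (S \<sigma>)" if "\<sigma> \<in> A" for \<sigma>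
    using assms(5) that by (simp add: on_Pi_def pp_def)
  have Urel: "2 * U \<sigma> * deriv U \<sigma> = pd (S \<sigma>) * deriv S \<sigma>" if \<sigma>: "\<sigma> \<in> A" for \<sigma>
  proof -
    have 1: "((\<lambda>x. U x ^ 2) has_field_derivative 2 * U \<sigma> * deriv U \<sigma>) (at \<sigma>)"
      using DERIV_power[OF dU[OF \<sigma>], of 2] by (simp add: algebra_simps)
    have 2: "((\<lambda>x. pp (S x)) has_field_derivative pd (S \<sigma>) * deriv S \<sigma>) (at \<sigma>)"
      by (rule DERIV_chain2[OF pp_deriv dS[OF \<sigma>]])
    have 3: "((\<lambda>x. pp (S x)) has_field_derivative 2 * U \<sigma> * deriv U \<sigma>) (at \<sigma>)"
      by (rule has_field_derivative_transform_within_open[OF 1 assms(1) \<sigma>]) (simp add: u2)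
    show ?thesis using DERIV_unique[OF 3 2] .
  qed
  have dT: "deriv T \<sigma> = deriv S \<sigma> * U \<sigma> * rtp (S \<sigma>)"
    if \<sigma>: "\<sigma> \<in> A" and n: "S \<sigma> \<noteq> 0" "a_s1 (S \<sigma>) \<noteq> 0" "a_q2 (S \<sigma>) \<noteq> 0" "a_Q6 (S \<sigma>) \<noteq> 0" for \<sigma>
  proof -
    have DT: "DT (S \<sigma>) \<noteq> 0" using n by (simp add: DT_fac)
    have u0: "U \<sigma> \<noteq> 0" using u2[OF \<sigma>] n by (auto simp: pp_fac)
    have h: "(T has_field_derivative -(Bd (S \<sigma>) * deriv S \<sigma> * U \<sigma> + Bf (S \<sigma>) * deriv U \<sigma>)) (at \<sigma>)"
      unfolding T_eq by (rule F_hasderiv[OF Bf_deriv[OF DT] dS[OF \<sigma>] dU[OF \<sigma>]])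
    have "-(Bd (S \<sigma>) * deriv S \<sigma> * U \<sigma> + Bf (S \<sigma>) * deriv U \<sigma>) = deriv S \<sigma> * U \<sigma> * rtp (S \<sigma>)"
      by (rule comb[OF u2[OF \<sigma>] u0 Urel[OF \<sigma>] pRt[OF n, symmetric]])
    with h show ?thesis by (simp add: DERIV_imp_deriv)
  qed
  have dY: "deriv Y \<sigma> = deriv S \<sigma> * U \<sigma> * ryp (S \<sigma>)"
    if \<sigma>: "\<sigma> \<in> A" and n: "S \<sigma> \<noteq> 0" "a_s1 (S \<sigma>) \<noteq> 0" "a_q2 (S \<sigma>) \<noteq> 0" "a_Q6 (S \<sigma>) \<noteq> 0" for \<sigma>
  proof -
    have DY: "DY (S \<sigma>) \<noteq> 0" using n by (simp add: DY_fac)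
    have u0: "U \<sigma> \<noteq> 0" using u2[OF \<sigma>] n by (auto simp: pp_fac)
    have h: "(Y has_field_derivative -(Ad (S \<sigma>) * deriv S \<sigma> * U \<sigma> + Af (S \<sigma>) * deriv U \<sigma>)) (at \<sigma>)"
      unfolding Y_eq by (rule F_hasderiv[OF Af_deriv[OF DY] dS[OF \<sigma>] dU[OF \<sigma>]])
    have "-(Ad (S \<sigma>) * deriv S \<sigma> * U \<sigma> + Af (S \<sigma>) * deriv U \<sigma>) = deriv S \<sigma> * U \<sigma> * ryp (S \<sigma>)"
      by (rule comb[OF u2[OF \<sigma>] u0 Urel[OF \<sigma>] pRy[OF n, symmetric]])
    with h show ?thesis by (simp add: DERIV_imp_deriv)
  qed
  define s where "s = S \<tau>"
  define u where "u = U \<tau>"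
  have n1: "s \<noteq> 0" using assms(6) by (simp add: s_def)
  have n2: "a_s1 s \<noteq> 0" using assms(7) unfolding s_def a_s1_def by (metis add.commute)
  have n3: "a_q2 s \<noteq> 0"
  proof -
    have "a_q2 s = s^2 + s + 7" unfolding a_q2_def by algebra
    then show ?thesis using assms(8) by (simp add: s_def)
  qed
  have n4: "a_Q6 s \<noteq> 0"
  proof -
    have "a_Q6 s = 5* s^6 + 63* s^5 + 252* s^4 + 854* s^3 + 1449* s^2 + 1827* s + 2030"
      unfolding a_Q6_def by algebra
    then show ?thesis using assms(9) by (simp add: s_def)
  qed
  note nb = n1 n2 n3 n4
  have uu2: "u^2 = pp s" using u2[OF assms(2)] by (simp add: s_def u_def)
  have u0: "u \<noteq> 0" using uu2 nb by (auto simp: pp_fac)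
  have dTt: "deriv T \<tau> = deriv S \<tau> * u * rtp s"
    using dT[OF assms(2) nb[unfolded s_def]] by (simp add: s_def u_def)
  have dT0: "deriv T \<tau> \<noteq> 0" using assms(10) by (simp add: T_def)
  have S'0: "deriv S \<tau> \<noteq> 0" and rt0: "rtp s \<noteq> 0" using dT0 dTt by auto
  have n5: "a_sm1 s \<noteq> 0" "a_r16 s \<noteq> 0" "a_r47 s \<noteq> 0" using rt0 by (auto simp: rtp_def)
  note nf = n1 n2 n3 n4 n5
  have cS: "isCont S \<tau>"
    using holomorphic_on_imp_continuous_on[OF assms(3)] assms(1,2) continuous_on_eq_continuous_at by blast
  have cdS: "isCont (deriv S) \<tau>"
    using holomorphic_on_imp_continuous_on[OF holomorphic_deriv[OF assms(3,1)]] assms(1,2)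
      continuous_on_eq_continuous_at by blast
  have ev: "eventually (\<lambda>\<sigma>. \<sigma> \<in> A \<and> S \<sigma> \<noteq> 0 \<and> a_s1 (S \<sigma>) \<noteq> 0 \<and> a_q2 (S \<sigma>) \<noteq> 0 \<and> a_Q6 (S \<sigma>) \<noteq> 0
      \<and> a_sm1 (S \<sigma>) \<noteq> 0 \<and> a_r16 (S \<sigma>) \<noteq> 0 \<and> a_r47 (S \<sigma>) \<noteq> 0 \<and> deriv S \<sigma> \<noteq> 0) (nhds \<tau>)"
  proof (intro eventually_conj)
    show "eventually (\<lambda>\<sigma>. \<sigma> \<in> A) (nhds \<tau>)" by (rule eventually_nhds_in_open[OF assms(1,2)])
    show "eventually (\<lambda>\<sigma>. S \<sigma> \<noteq> 0) (nhds \<tau>)" by (rule ev_ne[OF cS]) (use n1 s_def in simp)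
    show "eventually (\<lambda>\<sigma>. a_s1 (S \<sigma>) \<noteq> 0) (nhds \<tau>)"
      by (rule ev_ne) (unfold a_s1_def, intro continuous_intros cS, use n2 s_def in \<open>simp add: a_defs\<close>)
    show "eventually (\<lambda>\<sigma>. a_q2 (S \<sigma>) \<noteq> 0) (nhds \<tau>)"
      by (rule ev_ne) (unfold a_q2_def, intro continuous_intros cS, use n3 s_def in \<open>simp add: a_defs\<close>)
    show "eventually (\<lambda>\<sigma>. a_Q6 (S \<sigma>) \<noteq> 0) (nhds \<tau>)"
      by (rule ev_ne) (unfold a_Q6_def, intro continuous_intros cS, use n4 s_def in \<open>simp add: a_defs\<close>)
    show "eventually (\<lambda>\<sigma>. a_sm1 (S \<sigma>) \<noteq> 0) (nhds \<tau>)"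
      by (rule ev_ne) (unfold a_sm1_def, intro continuous_intros cS, use n5 s_def in \<open>simp add: a_defs\<close>)
    show "eventually (\<lambda>\<sigma>. a_r16 (S \<sigma>) \<noteq> 0) (nhds \<tau>)"
      by (rule ev_ne) (unfold a_r16_def, intro continuous_intros cS, use n5 s_def in \<open>simp add: a_defs\<close>)
    show "eventually (\<lambda>\<sigma>. a_r47 (S \<sigma>) \<noteq> 0) (nhds \<tau>)"
      by (rule ev_ne) (unfold a_r47_def, intro continuous_intros cS, use n5 s_def in \<open>simp add: a_defs\<close>)
    show "eventually (\<lambda>\<sigma>. deriv S \<sigma> \<noteq> 0) (nhds \<tau>)" by (rule ev_ne[OF cdS S'0])
  qed
  have evY1: "eventually (\<lambda>\<sigma>. Y1 \<sigma> = Cf (S \<sigma>)) (nhds \<tau>)"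
    using ev
  proof (rule eventually_mono)
    fix \<sigma> assume h: "\<sigma> \<in> A \<and> S \<sigma> \<noteq> 0 \<and> a_s1 (S \<sigma>) \<noteq> 0 \<and> a_q2 (S \<sigma>) \<noteq> 0 \<and> a_Q6 (S \<sigma>) \<noteq> 0
      \<and> a_sm1 (S \<sigma>) \<noteq> 0 \<and> a_r16 (S \<sigma>) \<noteq> 0 \<and> a_r47 (S \<sigma>) \<noteq> 0 \<and> deriv S \<sigma> \<noteq> 0"
    have u0: "U \<sigma> \<noteq> 0" using u2[of \<sigma>] h by (auto simp: pp_fac)
    have "Y1 \<sigma> = (deriv S \<sigma> * U \<sigma> * ryp (S \<sigma>)) / (deriv S \<sigma> * U \<sigma> * rtp (S \<sigma>))"
      unfolding Y1_def using dT[of \<sigma>] dY[of \<sigma>] h by simp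
    also have "... = ryp (S \<sigma>) / rtp (S \<sigma>)" using h u0 by simp
    also have "... = Cf (S \<sigma>)" using pC(1)[of "S \<sigma>"] h by simp
    finally show "Y1 \<sigma> = Cf (S \<sigma>)" .
  qed
  have CDx0: "CDx s \<noteq> 0" using nf by (simp add: CDx_fac)
  have dC: "((\<lambda>\<sigma>. Cf (S \<sigma>)) has_field_derivative Cpp s * deriv S \<tau>) (at \<tau>)"
    using DERIV_chain2[OF Cf_deriv[OF CDx0[unfolded s_def]] dS[OF assms(2)]] pCp[OF nf[unfolded s_def]]
    by (simp add: s_def)
  have dY1: "deriv Y1 \<tau> = Cpp s * deriv S \<tau>"
    using DERIV_cong_ev[OF refl evY1 refl] dC by (simp add: DERIV_imp_deriv)
  have Y1t: "Y1 \<tau> = Cf s" using eventually_nhds_x_imp_x[OF evY1] by (simp add: s_def)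
  have Y2: "deriv Y1 \<tau> / deriv T \<tau> = (Cpp s / (pp s * rtp s)) * u"
    unfolding dY1 dTt using S'0 u0 rt0 uu2[symmetric] by (simp add: field_simps power2_eq_square)
  have pp0: "pp s \<noteq> 0" using nb by (simp add: pp_fac)
  have main: "PVI_eq (4/7) (4/7) (4/7) (1/3) (1/2 - Bf s * u) (1/2 - Af s * u) (Cf s) ((Cpp s / (pp s * rtp s)) * u)"
  proof (rule PVI_subst[OF uu2])
    show "1/2 - Af s * u \<noteq> 0" "1/2 - Af s * u \<noteq> 1" "1/2 - Af s * u \<noteq> 1/2 - Bf s * u"
      using assms(12) by (simp_all add: s_def u_def t_eq y_eq)
    show "1/2 - Bf s * u \<noteq> 0" "1/2 - Bf s * u \<noteq> 1"
      using assms(11) by (simp_all add: s_def u_def t_eq)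
    show "Af s ^ 2 * pp s - 1/4 = Yp s" by (rule pY[OF nb])
    show "Bf s ^ 2 * pp s - 1/4 = Ttp s" by (rule pTt[OF nb])
    show "(Bf s - Af s) ^ 2 * pp s = D2p s" by (rule pD2[OF nb])
    show "- 1/4 - Af s ^ 2 * pp s + 2 * Af s * Bf s * pp s = Wp s" by (rule pW[OF nb])
    show "2 * Af s * (Af s - Bf s) * pp s + (Af s ^ 2 * pp s - 1/4) = Ayp s" by (rule pAy[OF nb])
    show "2 * Bf s * (Af s - Bf s) * pp s + (Bf s ^ 2 * pp s - 1/4) = Btp s" by (rule pBt[OF nb])
    show "Bf s - Af s = BmAp s" by (rule pBmA[OF nb])
    show "Cpp s / (pp s * rtp s) * pp s = Cpp s / rtp s" using pp0 rt0 by (simp add: field_simps)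
    show "2 * Yp s * BmAp s * Ttp s^2 * (Cpp s / rtp s) = Ttp s^2 * Ayp s * Cf s^2 - 2 * Yp s * Ttp s * Btp s * Cf s + 2 * (2/9 * Yp s^2 * D2p s + 8/49 * Wp s * D2p s + 33/98 * Ttp s * Yp s^2)"
      using final_id[OF nf] unfolding pC2[of s] .
  qed
  have "PVI_eq (4/7) (4/7) (4/7) (1/3) (T \<tau>) (Y \<tau>) (Y1 \<tau>) (deriv Y1 \<tau> / deriv T \<tau>)"
    using main unfolding Y2 Y1t by (simp add: T_eq Y_eq s_def u_def)
  then show ?thesis unfolding Let_def T_def Y_def Y1_def .
qed

end
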